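(* Let $S,T$ be left inverse semi-braces whose associated maps $r_S$ and $r_T$ are solutions, and let $\sigma:T\to\mathrm{Aut}(S)$ be a homomorphism from $(T,\cdot)$ into the automorphism group of the left inverse semi-brace $S$; write ${}^ua=\sigma(u)(a)$. Let $B=S\rtimes_\sigma T$ be the semidirect product. Then the map $r_B$ associated to $B$, which is given by $$r_B((a,u),(b,v))=\left(\left({}^u\lambda_{{}^{u^{-1}}a}(b),\,\lambda_u(v)\right),\ \left({}^{\lambda_u(v)^{-1}}\rho_{{}^ub}(a),\,\rho_v(u)\right)\right)$$ for all $(a,u),(b,v)\in S\times T$, is a solution.
   Context: An inverse semigroup is a semigroup $(S,\cdot)$ in which for each $a$ there is a unique $a^{-1}$ with $aa^{-1}a=a$, $a^{-1}aa^{-1}=a^{-1}$. A left inverse semi-brace is a triple $(S,+,\cdot)$ with $(S,+)$ a semigroup, $(S,\cdot)$ an inverse semigroup and $a(b+c)=ab+a(a^{-1}+c)$ for all $a,b,c$. In it set $\lambda_a(b)=a(a^{-1}+b)$, $\rho_b(a)=(a^{-1}+b)^{-1}b$; the map associated to $S$ is $r_S(a,b)=(\lambda_a(b),\rho_b(a))$. A solution is a map $r:X\times X\to X\times X$ with $(r\times\mathrm{id})(\mathrm{id}\times r)(r\times\mathrm{id})=(\mathrm{id}\times r)(r\times\mathrm{id})(\mathrm{id}\times r)$. An automorphism of the left inverse semi-brace $S$ is a bijection preserving both operations. The semidirect product $S\rtimes_\sigma T$ is $S\times T$ with $(a,u)+(b,v)=(a+b,u+v)$ and $(a,u)(b,v)=(a\,{}^ub,uv)$;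 it is a left inverse semi-brace and $r_B$ is its associated map. *)

theory Defs
  imports Main
begin

definition is_semigroup :: "('a \<Rightarrow> 'a \<Rightarrow> 'a) \<Rightarrow> bool" where
  "is_semigroup m \<longleftrightarrow> (\<forall>a b c. m (m a b) c = m a (m b c))"

definition is_inverse_semigroup :: "('a \<Rightarrow> 'a \<Rightarrow> 'a) \<Rightarrow> bool" where
  "is_inverse_semigroup m \<longleftrightarrow> is_semigroup m \<and>
     (\<forall>a. \<exists>!x. m (m a x) a = a \<and> m (m x a) x = x)"

definition inv_of :: "('a \<Rightarrow> 'a \<Rightarrow> 'a) \<Rightarrow> 'a \<Rightarrow> 'a" where
  "inv_of m a = (THE x. m (m a x) a = a \<and> m (m x a) x = x)"

definition left_inverse_semi_brace :: "('a \<Rightarrow> 'a \<Rightarrow> 'a) \<Rightarrow> ('a \<Rightarrow> 'a \<Rightarrow> 'a) \<Rightarrow> bool" where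
  "left_inverse_semi_brace add mult \<longleftrightarrow> is_semigroup add \<and> is_inverse_semigroup mult \<and>
     (\<forall>a b c. mult a (add b c) = add (mult a b) (mult a (add (inv_of mult a) c)))"

definition lam :: "('a \<Rightarrow> 'a \<Rightarrow> 'a) \<Rightarrow> ('a \<Rightarrow> 'a \<Rightarrow> 'a) \<Rightarrow> 'a \<Rightarrow> 'a \<Rightarrow> 'a" where
  "lam add mult a b = mult a (add (inv_of mult a) b)"

definition rho :: "('a \<Rightarrow> 'a \<Rightarrow> 'a) \<Rightarrow> ('a \<Rightarrow> 'a \<Rightarrow> 'a) \<Rightarrow> 'a \<Rightarrow> 'a \<Rightarrow> 'a" where
  "rho add mult b a = mult (inv_of mult (add (inv_of mult a) b)) b"

definition assoc_map :: "('a \<Rightarrow> 'a \<Rightarrow> 'a) \<Rightarrow> ('a \<Rightarrow> 'a \<Rightarrow> 'a) \<Rightarrow> 'a \<times> 'a \<Rightarrow> 'a \<times> 'a" where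
  "assoc_map add mult = (\<lambda>(a, b). (lam add mult a b, rho add mult b a))"

definition is_solution :: "('x \<times> 'x \<Rightarrow> 'x \<times> 'x) \<Rightarrow> bool" where
  "is_solution r \<longleftrightarrow>
     (\<forall>x y z.
        (let r12 = (\<lambda>(a, b, c). (fst (r (a, b)), snd (r (a, b)), c));
             r23 = (\<lambda>(a, b, c). (a, fst (r (b, c)), snd (r (b, c))))
         in r12 (r23 (r12 (x, y, z))) = r23 (r12 (r23 (x, y, z)))))"

definition semi_brace_aut :: "('a \<Rightarrow> 'a \<Rightarrow> 'a) \<Rightarrow> ('a \<Rightarrow> 'a \<Rightarrow> 'a) \<Rightarrow> ('a \<Rightarrow> 'a) \<Rightarrow> bool" where
  "semi_brace_aut add mult f \<longleftrightarrow> bij f \<and>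
     (\<forall>a b. f (add a b) = add (f a) (f b)) \<and> (\<forall>a b. f (mult a b) = mult (f a) (f b))"

definition sd_add :: "('a \<Rightarrow> 'a \<Rightarrow> 'a) \<Rightarrow> ('b \<Rightarrow> 'b \<Rightarrow> 'b) \<Rightarrow> 'a \<times> 'b \<Rightarrow> 'a \<times> 'b \<Rightarrow> 'a \<times> 'b" where
  "sd_add addS addT p q = (addS (fst p) (fst q), addT (snd p) (snd q))"

definition sd_mult :: "('a \<Rightarrow> 'a \<Rightarrow> 'a) \<Rightarrow> ('b \<Rightarrow> 'b \<Rightarrow> 'b) \<Rightarrow> ('b \<Rightarrow> 'a \<Rightarrow> 'a)
    \<Rightarrow> 'a \<times> 'b \<Rightarrow> 'a \<times> 'b \<Rightarrow> 'a \<times> 'b" where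
  "sd_mult multS multT \<sigma> p q = (multS (fst p) (\<sigma> (snd p) (fst q)), multT (snd p) (snd q))"

end

theory Submission
  imports Defs
begin

lemma sol_iff:
  "is_solution (\<lambda>(a,b). (L a b, R b a)) \<longleftrightarrow>
   (\<forall>x y z. L (L x y) (L (R y x) z) = L x (L y z) \<and>
            R (L (R y x) z) (L x y) = L (R (L y z) x) (R z y) \<and>
            R z (R y x) = R (R z y) (R (L y z) x))"
  unfolding is_solution_def Let_def by auto

lemma inv_ex:
  assumes "is_inverse_semigroup m"
  shows "m (m a (inv_of m a)) a = a" "m (m (inv_of m a) a) (inv_of m a) = inv_of m a"
proof -
  have "\<exists>!x. m (m a x) a = a \<and> m (m x a) x = x" using assms unfolding is_inverse_semigroup_def by blast
  from theI'[OF this] show "m (m a (inv_of m a)) a = a" "m (m (inv_of m a) a) (inv_of m a) = inv_of m a"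
    unfolding inv_of_def by auto
qed

lemma inv_uniq:
  assumes "is_inverse_semigroup m" "m (m a x) a = a" "m (m x a) x = x"
  shows "inv_of m a = x"
proof -
  have "\<exists>!x. m (m a x) a = a \<and> m (m x a) x = x" using assms unfolding is_inverse_semigroup_def by blast
  then show ?thesis unfolding inv_of_def using assms by (intro the1_equality) auto
qed

locale cs =
  fixes addS multS :: "'a \<Rightarrow> 'a \<Rightarrow> 'a"
    and addT multT :: "'b \<Rightarrow> 'b \<Rightarrow> 'b"
    and \<sigma> :: "'b \<Rightarrow> 'a \<Rightarrow> 'a"
  assumes S: "left_inverse_semi_brace addS multS"
    and T: "left_inverse_semi_brace addT multT"
    and solS: "is_solution (assoc_map addS multS)"
    and solT: "is_solution (assoc_map addT multT)"
    and aut: "\<forall>u. semi_brace_aut addS multS (\<sigma> u)"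
    and hom: "\<forall>u v. \<sigma> (multT u v) = \<sigma> u \<circ> \<sigma> v"
begin

abbreviation "iS \<equiv> inv_of multS"
abbreviation "iT \<equiv> inv_of multT"
abbreviation "lS \<equiv> lam addS multS"
abbreviation "rS \<equiv> rho addS multS"
abbreviation "lT \<equiv> lam addT multT"
abbreviation "rT \<equiv> rho addT multT"

lemma invS: "is_inverse_semigroup multS" using S unfolding left_inverse_semi_brace_def by auto
lemma invT: "is_inverse_semigroup multT" using T unfolding left_inverse_semi_brace_def by auto
lemma assocT: "multT (multT a b) c = multT a (multT b c)"
  using invT unfolding is_inverse_semigroup_def is_semigroup_def by auto

lemma sig_add[simp]: "\<sigma> u (addS a b) = addS (\<sigma> u a) (\<sigma> u b)"
  using aut unfolding semi_brace_aut_def by auto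
lemma sig_mult[simp]: "\<sigma> u (multS a b) = multS (\<sigma> u a) (\<sigma> u b)"
  using aut unfolding semi_brace_aut_def by auto
lemma sig_inj: "inj (\<sigma> u)"
  using aut unfolding semi_brace_aut_def bij_def by auto
lemma sig_eq_iff: "\<sigma> u x = \<sigma> u y \<longleftrightarrow> x = y"
  using sig_inj[of u] by (auto dest: injD)
lemma sig_hom[simp]: "\<sigma> (multT u v) x = \<sigma> u (\<sigma> v x)"
  using hom by auto

lemma sig_inv[simp]: "\<sigma> u (iS a) = iS (\<sigma> u a)"
proof -
  have "multS (multS (\<sigma> u a) (\<sigma> u (iS a))) (\<sigma> u a) = \<sigma> u (multS (multS a (iS a)) a)" by simp
  also have "\<dots> = \<sigma> u a" using inv_ex[OF invS] by simp
  finally have 1: "multS (multS (\<sigma> u a) (\<sigma> u (iS a))) (\<sigma> u a) = \<sigma> u a" .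
  have "multS (multS (\<sigma> u (iS a)) (\<sigma> u a)) (\<sigma> u (iS a)) = \<sigma> u (multS (multS (iS a) a) (iS a))" by simp
  also have "\<dots> = \<sigma> u (iS a)" using inv_ex[OF invS] by simp
  finally have 2: "multS (multS (\<sigma> u (iS a)) (\<sigma> u a)) (\<sigma> u (iS a)) = \<sigma> u (iS a)" .
  show ?thesis using inv_uniq[OF invS 1 2] by simp
qed

lemma sig_idem: assumes "multT e e = e" shows "\<sigma> e x = x"
proof -
  have "\<sigma> e (\<sigma> e x) = \<sigma> e x" using sig_hom[of e e x] assms by simp
  then show ?thesis by (simp add: sig_eq_iff)
qed

lemma sig_c1[simp]: "\<sigma> x (\<sigma> (iT x) y) = y"
proof -
  have "multT (multT x (iT x)) (multT x (iT x)) = multT x (iT x)"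
    using inv_ex[OF invT, of x] by (metis assocT)
  from sig_idem[OF this] show ?thesis by simp
qed

lemma sig_c2[simp]: "\<sigma> (iT x) (\<sigma> x y) = y"
proof -
  have "multT (multT (iT x) x) (multT (iT x) x) = multT (iT x) x"
    using inv_ex[OF invT, of x] by (metis assocT)
  from sig_idem[OF this] show ?thesis by simp
qed

lemma sig_lam[simp]: "\<sigma> u (lS a b) = lS (\<sigma> u a) (\<sigma> u b)"
  unfolding lam_def by simp
lemma sig_rho[simp]: "\<sigma> u (rS a b) = rS (\<sigma> u a) (\<sigma> u b)"
  unfolding rho_def by simp

lemma F7[simp]: "\<sigma> (lT u v) (\<sigma> (rT v u) x) = \<sigma> u (\<sigma> v x)"
  unfolding lam_def rho_def by simp

abbreviation "addB \<equiv> sd_add addS addT"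
abbreviation "multB \<equiv> sd_mult multS multT \<sigma>"

lemma invB: "inv_of multB (a,u) = (\<sigma> (iT u) (iS a), iT u)"
  unfolding inv_of_def[of multB]
proof (rule the_equality)
  have "multS (multS a (iS a)) a = a" using inv_ex[OF invS] by simp
  moreover have "multS (multS (\<sigma> (iT u) (iS a)) (\<sigma> (iT u) a)) (\<sigma> (iT u) (iS a)) = \<sigma> (iT u) (iS a)"
  proof -
    have "multS (multS (\<sigma> (iT u) (iS a)) (\<sigma> (iT u) a)) (\<sigma> (iT u) (iS a)) = \<sigma> (iT u) (multS (multS (iS a) a) (iS a))"
      by (simp del: sig_inv)
    then show ?thesis using inv_ex[OF invS, of a] by simp
  qed
  ultimately show "multB (multB (a, u) (\<sigma> (iT u) (iS a), iT u)) (a, u) = (a, u) \<and>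
    multB (multB (\<sigma> (iT u) (iS a), iT u) (a, u)) (\<sigma> (iT u) (iS a), iT u) = (\<sigma> (iT u) (iS a), iT u)"
    using inv_ex[OF invT, of u] by (simp add: sd_mult_def del: sig_inv)
next
  fix p assume P: "multB (multB (a, u) p) (a, u) = (a, u) \<and> multB (multB p (a, u)) p = p"
  obtain x w where p: "p = (x,w)" by (cases p)
  have w1: "multT (multT u w) u = u" and w2: "multT (multT w u) w = w"
    using P unfolding p sd_mult_def by auto
  have w: "w = iT u" using inv_uniq[OF invT w1 w2] by simp
  have x1: "multS (multS a (\<sigma> u x)) a = a" and x2: "multS (multS x (\<sigma> (iT u) a)) x = x"
    using P unfolding p sd_mult_def w by (auto simp del: sig_inv)
  have "\<sigma> u (multS (multS x (\<sigma> (iT u) a)) x) = \<sigma> u x" using x2 by simp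
  then have x2': "multS (multS (\<sigma> u x) a) (\<sigma> u x) = \<sigma> u x" by (simp del: sig_inv)
  have "iS a = \<sigma> u x" using inv_uniq[OF invS x1 x2'] .
  then have "\<sigma> (iT u) (iS a) = x" by simp
  then show "p = (\<sigma> (iT u) (iS a), iT u)" using p w by simp
qed

lemma lamB: "lam addB multB (a,u) (b,v) = (lS a (\<sigma> u b), lT u v)"
  unfolding lam_def invB by (simp add: sd_add_def sd_mult_def)

lemma sig_aux: "\<sigma> (iT (multT u w)) (\<sigma> u y) = \<sigma> (iT w) y"
proof -
  have "\<sigma> (multT u w) (\<sigma> (iT (multT u w)) (\<sigma> u y)) = \<sigma> (multT u w) (\<sigma> (iT w) y)"
    by (simp del: sig_hom) (simp)
  then show ?thesis by (simp only: sig_eq_iff)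
qed

lemma rhoB: "rho addB multB (b,v) (a,u) = (\<sigma> (iT (lT u v)) (rS (\<sigma> u b) a), rT v u)"
proof -
  let ?c = "addS (\<sigma> (iT u) (iS a)) b"
  let ?w = "addT (iT u) v"
  have c: "addS (iS a) (\<sigma> u b) = \<sigma> u ?c" by simp
  have "rho addB multB (b,v) (a,u) = (\<sigma> (iT ?w) (multS (iS ?c) b), rT v u)"
    unfolding rho_def invB by (simp add: sd_add_def sd_mult_def invB del: sig_inv sig_add)
  also have "\<sigma> (iT ?w) (multS (iS ?c) b) = \<sigma> (iT (lT u v)) (rS (\<sigma> u b) a)"
    unfolding rho_def lam_def c
    by (simp only: sig_inv[symmetric] sig_mult[symmetric] sig_aux)
  finally show ?thesis .
qed

lemma eqS: "lS (lS x y) (lS (rS y x) z) = lS x (lS y z)"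
  "rS (lS (rS y x) z) (lS x y) = lS (rS (lS y z) x) (rS z y)"
  "rS z (rS y x) = rS (rS z y) (rS (lS y z) x)"
  using solS unfolding assoc_map_def sol_iff by auto
lemma eqT: "lT (lT x y) (lT (rT y x) z) = lT x (lT y z)"
  "rT (lT (rT y x) z) (lT x y) = lT (rT (lT y z) x) (rT z y)"
  "rT z (rT y x) = rT (rT z y) (rT (lT y z) x)"
  using solT unfolding assoc_map_def sol_iff by auto

lemma main: "is_solution (assoc_map addB multB)"
  unfolding assoc_map_def sol_iff
proof (intro allI)
  fix x y z :: "'a \<times> 'b"
  obtain a u where x: "x = (a,u)" by (cases x)
  obtain b v where y: "y = (b,v)" by (cases y)
  obtain c t where z: "z = (c,t)" by (cases z)
  let ?b1 = "\<sigma> u b" and ?c1 = "\<sigma> u (\<sigma> v c)"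
  have e1: "lS (lS a ?b1) (\<sigma> (lT u v) (lS (\<sigma> (iT (lT u v)) (rS ?b1 a)) (\<sigma> (rT v u) c)))
      = lS a (\<sigma> u (lS b (\<sigma> v c)))"
    using eqS(1)[of a ?b1 ?c1] by simp
  have e2: "\<sigma> (iT (lT (lT u v) (lT (rT v u) t))) (rS (\<sigma> (lT u v) (lS (\<sigma> (iT (lT u v)) (rS ?b1 a)) (\<sigma> (rT v u) c))) (lS a ?b1))
     = lS (\<sigma> (iT (lT u (lT v t))) (rS (\<sigma> u (lS b (\<sigma> v c))) a))
          (\<sigma> (rT (lT v t) u) (\<sigma> (iT (lT v t)) (rS (\<sigma> v c) b)))"
  proof -
    let ?g = "lT u (lT v t)"
    have "\<sigma> ?g (lS (\<sigma> (iT ?g) (rS (\<sigma> u (lS b (\<sigma> v c))) a))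
          (\<sigma> (rT (lT v t) u) (\<sigma> (iT (lT v t)) (rS (\<sigma> v c) b))))
        = lS (rS (lS ?b1 ?c1) a) (rS ?c1 ?b1)"
      by (simp del: sig_hom)
    also have "\<dots> = rS (lS (rS ?b1 a) ?c1) (lS a ?b1)" using eqS(2)[where x=a and y="?b1" and z="?c1"] by simp
    also have "\<dots> = \<sigma> ?g (\<sigma> (iT (lT (lT u v) (lT (rT v u) t))) (rS (\<sigma> (lT u v) (lS (\<sigma> (iT (lT u v)) (rS ?b1 a)) (\<sigma> (rT v u) c))) (lS a ?b1)))"
      unfolding eqT(1) by simp
    finally show ?thesis by (simp only: sig_eq_iff)
  qed
  have K: "\<sigma> (lT u v) (\<sigma> (lT (rT v u) t) w) = \<sigma> (lT u (lT v t)) (\<sigma> (lT (rT (lT v t) u) (rT t v)) w)" for w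
    using F7[of "lT u v" "lT (rT v u) t" w] eqT(1)[of u v t] eqT(2)[where x=u and y=v and z=t] by simp
  have e3: "\<sigma> (iT (lT (rT v u) t)) (rS (\<sigma> (rT v u) c) (\<sigma> (iT (lT u v)) (rS ?b1 a)))
     = \<sigma> (iT (lT (rT (lT v t) u) (rT t v))) (rS (\<sigma> (rT (lT v t) u) (\<sigma> (iT (lT v t)) (rS (\<sigma> v c) b)))
          (\<sigma> (iT (lT u (lT v t))) (rS (\<sigma> u (lS b (\<sigma> v c))) a)))"
  proof -
    have "\<sigma> (lT u v) (\<sigma> (lT (rT v u) t) (\<sigma> (iT (lT (rT v u) t)) (rS (\<sigma> (rT v u) c) (\<sigma> (iT (lT u v)) (rS ?b1 a)))))
        = rS ?c1 (rS ?b1 a)" by (simp del: sig_hom)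
    also have "\<dots> = rS (rS ?c1 ?b1) (rS (lS ?b1 ?c1) a)" using eqS(3)[where x=a and y="?b1" and z="?c1"] by simp
    also have "\<dots> = \<sigma> (lT u (lT v t)) (\<sigma> (lT (rT (lT v t) u) (rT t v)) (\<sigma> (iT (lT (rT (lT v t) u) (rT t v))) (rS (\<sigma> (rT (lT v t) u) (\<sigma> (iT (lT v t)) (rS (\<sigma> v c) b)))
          (\<sigma> (iT (lT u (lT v t))) (rS (\<sigma> u (lS b (\<sigma> v c))) a)))))"
      by (simp del: sig_hom)
    finally show ?thesis unfolding K by (simp only: sig_eq_iff)
  qed
  show "lam addB multB (lam addB multB x y) (lam addB multB (rho addB multB y x) z) = lam addB multB x (lam addB multB y z) \<and>
        rho addB multB (lam addB multB (rho addB multB y x) z) (lam addB multB x y) =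
        lam addB multB (rho addB multB (lam addB multB y z) x) (rho addB multB z y) \<and>
        rho addB multB z (rho addB multB y x) = rho addB multB (rho addB multB z y) (rho addB multB (lam addB multB y z) x)"
    unfolding x y z lamB rhoB
    apply (intro conjI)
    subgoal using e1 eqT(1) by simp
    subgoal using e2 eqT(2) by simp
    subgoal using e3 eqT(3) by simp
    done
qed

end

theorem corollary34:
  fixes addS multS :: "'a \<Rightarrow> 'a \<Rightarrow> 'a"
    and addT multT :: "'b \<Rightarrow> 'b \<Rightarrow> 'b"
    and \<sigma> :: "'b \<Rightarrow> 'a \<Rightarrow> 'a"
  assumes "left_inverse_semi_brace addS multS"
    and "left_inverse_semi_brace addT multT"
    and "is_solution (assoc_map addS multS)"
    and "is_solution (assoc_map addT multT)"
    and "\<forall>u. semi_brace_aut addS multS (\<sigma> u)"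
    and "\<forall>u v. \<sigma> (multT u v) = \<sigma> u \<circ> \<sigma> v"
  shows "is_solution (assoc_map (sd_add addS addT) (sd_mult multS multT \<sigma>))"
proof -
  interpret cs addS multS addT multT \<sigma> using assms by unfold_locales
  show ?thesis by (rule main)
qed

end
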